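(* Suppose Assumptions A1–A4 hold and $(\beta_t)$ is a positive sequence with $\lim_{t\to\infty}\beta_t=\infty$. Let $\bm{X}_t=\{\bm{x}_1,\dots,\bm{x}_t\}$ be the BOKE iterates, with bandwidth $\ell_t$ used at iteration $t$. Then: (i) If $\ell_t\equiv\ell$ is fixed, then $\inf_t h_{\mathcal{X},\bm{X}_t}\le R_\Psi\ell$ almost surely. (ii) There exists a bandwidth sequence $\ell_t\to0$ such that $\inf_t h_{\mathcal{X},\bm{X}_t}=0$ almost surely.
   Context: Standing setup. A1: $\mathcal{X}\subset\mathbb{R}^d$ is compact, convex, with nonempty interior. A2: $f:\mathcal{X}\to\mathbb{R}$ is continuous. A3: the kernel is $k(\bm{x},\bm{x}')=\Psi((\bm{x}-\bm{x}')/\ell)$ with bandwidth $\ell>0$, where $\Psi:\mathbb{R}^d\to[0,\infty)$ has support contained in $B(\bm{0},R_\Psi)$, is continuous at $\bm{0}$, $\Psi(\bm{0})>0$, $\sup\Psi\le M_\Psi$. A4: noises $\varepsilon_t$ independent, zero mean, sub-Gaussian with parameter $\varsigma>0$. For dataset $\bm{D}_t=\{(\bm{x}_i,y_i)\}_{i=1}^t$: $W_t(\bm{x})=\sum_i k(\bm{x},\bm{x}_i)$; $m_t(\bm{x})=\sum_ik(\bm{x},\bm{x}_i)y_i/W_t(\bm{x})$ if $W_t(\bm{x})>0$, else the average of $y_i$ over nearest points $\bm{x}_i$ to $\bm{x}$; $\hat\sigma_t=W_t^{-1/2}$ (with $c/0=\infty$). BOKE: starting from an initial dataset $\bm{D}_{T_0}$,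 for $t\ge T_0$ choose $\bm{x}_{t+1}\in\arg\max_{\bm{x}\in\mathcal{X}}\big(m_t(\bm{x})+\beta_t\hat\sigma_t(\bm{x})\big)$ (kernel quantities computed with bandwidth $\ell_t$), observe $y_{t+1}=f(\bm{x}_{t+1})+\varepsilon_{t+1}$ and add it to the dataset. The fill distance is $h_{\mathcal{X},\bm{X}_t}=\sup_{\bm{x}\in\mathcal{X}}\min_{i\le t}\|\bm{x}-\bm{x}_i\|$. *)

theory Defs
  imports "HOL-Probability.Probability"
begin

definition kern :: "('a::real_normed_vector \<Rightarrow> real) \<Rightarrow> real \<Rightarrow> 'a \<Rightarrow> 'a \<Rightarrow> real" where
  "kern Psi l x x' = Psi (scaleR (1 / l) (x - x'))"

text \<open>Dataset D_t = {(xs i, ys i) | i < t} (0-based indexing).\<close>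
definition Wt :: "('a::real_normed_vector \<Rightarrow> real) \<Rightarrow> real \<Rightarrow> (nat \<Rightarrow> 'a) \<Rightarrow> nat \<Rightarrow> 'a \<Rightarrow> real" where
  "Wt Psi l xs t x = (\<Sum>i<t. kern Psi l x (xs i))"

definition nearest_idx :: "(nat \<Rightarrow> 'a::metric_space) \<Rightarrow> nat \<Rightarrow> 'a \<Rightarrow> nat set" where
  "nearest_idx xs t x = {i. i < t \<and> (\<forall>j<t. dist x (xs i) \<le> dist x (xs j))}"

definition mt :: "('a::real_normed_vector \<Rightarrow> real) \<Rightarrow> real \<Rightarrow> (nat \<Rightarrow> 'a) \<Rightarrow> (nat \<Rightarrow> real) \<Rightarrow> nat \<Rightarrow> 'a \<Rightarrow> real" where
  "mt Psi l xs ys t x =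
     (if Wt Psi l xs t x > 0
      then (\<Sum>i<t. kern Psi l x (xs i) * ys i) / Wt Psi l xs t x
      else (\<Sum>i\<in>nearest_idx xs t x. ys i) / real (card (nearest_idx xs t x)))"

definition sigma_hat :: "('a::real_normed_vector \<Rightarrow> real) \<Rightarrow> real \<Rightarrow> (nat \<Rightarrow> 'a) \<Rightarrow> nat \<Rightarrow> 'a \<Rightarrow> ereal" where
  "sigma_hat Psi l xs t x =
     (if Wt Psi l xs t x > 0 then ereal (1 / sqrt (Wt Psi l xs t x)) else \<infinity>)"

definition acq :: "('a::real_normed_vector \<Rightarrow> real) \<Rightarrow> real \<Rightarrow> real \<Rightarrow> (nat \<Rightarrow> 'a) \<Rightarrow> (nat \<Rightarrow> real) \<Rightarrow> nat \<Rightarrow> 'a \<Rightarrow> ereal" where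
  "acq Psi l beta xs ys t x = ereal (mt Psi l xs ys t x) + ereal beta * sigma_hat Psi l xs t x"

definition boke_run :: "'w measure \<Rightarrow> 'a::real_normed_vector set \<Rightarrow> ('a \<Rightarrow> real) \<Rightarrow> ('a \<Rightarrow> real)
    \<Rightarrow> (nat \<Rightarrow> real) \<Rightarrow> (nat \<Rightarrow> real) \<Rightarrow> nat \<Rightarrow> (nat \<Rightarrow> 'a) \<Rightarrow> (nat \<Rightarrow> 'w \<Rightarrow> real)
    \<Rightarrow> (nat \<Rightarrow> 'w \<Rightarrow> 'a) \<Rightarrow> bool" where
  "boke_run M X f Psi beta ls T0 xinit eps x \<longleftrightarrow>
     (\<forall>\<omega>\<in>space M.
        (\<forall>i<T0. x i \<omega> = xinit i) \<and>
        (\<forall>t\<ge>T0. x t \<omega> \<in> X \<and>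
           (\<forall>z\<in>X. acq Psi (ls t) (beta t) (\<lambda>i. x i \<omega>) (\<lambda>i. f (x i \<omega>) + eps i \<omega>) t z
                 \<le> acq Psi (ls t) (beta t) (\<lambda>i. x i \<omega>) (\<lambda>i. f (x i \<omega>) + eps i \<omega>) t (x t \<omega>))))"

definition fill_distance :: "'a::metric_space set \<Rightarrow> 'a set \<Rightarrow> real" where
  "fill_distance X P = (SUP x\<in>X. infdist x P)"

definition sub_gaussian :: "'w measure \<Rightarrow> ('w \<Rightarrow> real) \<Rightarrow> real \<Rightarrow> bool" where
  "sub_gaussian M e s \<longleftrightarrow>
     (\<forall>lam::real. integrable M (\<lambda>\<omega>. exp (lam * e \<omega>)) \<and>
        (\<integral>\<omega>. exp (lam * e \<omega>) \<partial>M) \<le> exp (lam\<^sup>2 * s\<^sup>2 / 2))"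

end

theory Submission
  imports Defs
begin


lemma acq_inf: "\<not> Wt Psi l xs t z > 0 \<Longrightarrow> b > 0 \<Longrightarrow> acq Psi l b xs ys t z = \<infinity>"
  by (simp add: acq_def sigma_hat_def)

lemma acq_fin: "Wt Psi l xs t z > 0 \<Longrightarrow> acq Psi l b xs ys t z \<noteq> \<infinity>"
  by (simp add: acq_def sigma_hat_def)

lemma sep_bound:
  assumes "compact (X::'a::metric_space set)" "e > 0"
  shows "\<exists>N. \<forall>S. S \<subseteq> X \<longrightarrow> (\<forall>x\<in>S. \<forall>y\<in>S. x \<noteq> y \<longrightarrow> e \<le> dist x y) \<longrightarrow> card S \<le> N"
proof -
  have tb: "\<forall>\<epsilon>>0. \<exists>k. finite k \<and> X \<subseteq> (\<Union>x\<in>k. ball x \<epsilon>)"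
    using assms(1) unfolding compact_eq_totally_bounded by (rule conjunct2)
  have e2: "e/2 > 0" using assms(2) by simp
  obtain k where k: "finite k" "X \<subseteq> (\<Union>x\<in>k. ball x (e/2))"
    using tb[rule_format, OF e2] by (elim exE conjE)
  show ?thesis
  proof (intro exI allI impI)
    fix S assume S: "S \<subseteq> X" "\<forall>x\<in>S. \<forall>y\<in>S. x \<noteq> y \<longrightarrow> e \<le> dist x y"
    have ex: "\<exists>c. c \<in> k \<and> s \<in> ball c (e/2)" if "s \<in> S" for s
    proof -
      have "s \<in> (\<Union>x\<in>k. ball x (e/2))" using that subsetD[OF k(2)] subsetD[OF S(1)] by blast
      then show ?thesis by (simp only: UN_iff) (elim bexE, rule exI, erule conjI)
    qed
    define c where "c s = (SOME c. c \<in> k \<and> s \<in> ball c (e/2))" for s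
    have c: "c s \<in> k \<and> s \<in> ball (c s) (e/2)" if "s \<in> S" for s
      unfolding c_def by (rule someI_ex[OF ex[OF that]])
    have "inj_on c S"
    proof (rule inj_onI, rule ccontr)
      fix x y assume xy: "x \<in> S" "y \<in> S" "c x = c y" "x \<noteq> y"
      have d1: "dist (c x) x < e/2" using c[OF xy(1)] by simp
      have d2: "dist (c x) y < e/2" using c[OF xy(2)] xy(3) by simp
      have "dist x y \<le> dist (c x) x + dist (c x) y" by (rule dist_triangle3)
      then have "dist x y < e" using d1 d2 by linarith
      moreover have "e \<le> dist x y" using S(2) xy(1,2,4) by blast
      ultimately show False by linarith
    qed
    moreover have "c ` S \<subseteq> k" using c by blast
    ultimately show "card S \<le> card k" using card_inj_on_le k(1) by blast
  qed
qed

lemma fill_le: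
  assumes "X \<noteq> {}" "\<forall>z\<in>X. \<exists>p\<in>P. dist z p \<le> B"
  shows "fill_distance X P \<le> B"
  unfolding fill_distance_def
proof (rule cSUP_least[OF assms(1)])
  fix z assume "z \<in> X"
  then obtain p where "p \<in> P" "dist z p \<le> B" using assms by blast
  then show "infdist z P \<le> B" using infdist_le[of p P z] by linarith
qed

lemma fill_nonneg:
  fixes X :: "'a::real_normed_vector set"
  assumes "compact X" "X \<noteq> {}" "P \<noteq> {}"
  shows "fill_distance X P \<ge> 0"
proof -
  obtain z where z: "z \<in> X" using assms by blast
  obtain p where p: "p \<in> P" using assms by blast
  obtain B where B: "\<forall>x\<in>X. norm x \<le> B" using compact_imp_bounded[OF assms(1)] bounded_iff by blast
  have "bdd_above ((\<lambda>x. infdist x P) ` X)"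
  proof (rule bdd_aboveI2)
    fix x assume "x \<in> X"
    have "infdist x P \<le> dist x p" using infdist_le[OF p] .
    also have "\<dots> \<le> norm x + norm p" by (simp add: dist_norm norm_triangle_ineq4)
    finally show "infdist x P \<le> B + norm p" using B \<open>x\<in>X\<close> by force
  qed
  then have "infdist z P \<le> fill_distance X P" unfolding fill_distance_def using z by (rule cSUP_upper2) simp
  then show ?thesis using infdist_nonneg[of z P] by linarith
qed

lemma block:
  fixes xs :: "nat \<Rightarrow> 'a::real_normed_vector"
  assumes X: "compact X" "X \<noteq> {}"
  and Psi: "\<forall>z. 0 \<le> Psi z" "{z. Psi z \<noteq> 0} \<subseteq> cball 0 R"
  and r: "r>0" "\<forall>y. dist 0 y < r \<longrightarrow> Psi y \<noteq> 0"
  and beta: "\<forall>t. beta t > 0"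
  and run: "\<forall>t\<ge>T0. xs t \<in> X \<and> (\<forall>z\<in>X. acq Psi (ls t) (beta t) xs ys t z \<le> acq Psi (ls t) (beta t) xs ys t (xs t))"
  and l: "l > 0" "\<forall>t\<in>{a..a+N}. ls t = l"
  and a: "a \<ge> T0"
  and N: "\<forall>S. S \<subseteq> X \<longrightarrow> (\<forall>x\<in>S. \<forall>y\<in>S. x \<noteq> y \<longrightarrow> r*l \<le> dist x y) \<longrightarrow> card S \<le> N"
  shows "\<exists>t\<in>{a..a+N}. fill_distance X (xs ` {..<t}) \<le> R * l"
proof (rule ccontr)
  assume H: "\<not> ?thesis"
  have sep: "r*l \<le> dist (xs t) (xs i)" if t: "t \<in> {a..a+N}" "i < t" for t i
  proof -
    have lt: "ls t = l" using l t by blast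
    have "\<exists>z\<in>X. \<not> Wt Psi l xs t z > 0"
    proof (rule ccontr)
      assume "\<not> ?thesis"
      then have W: "\<forall>z\<in>X. Wt Psi l xs t z > 0" by blast
      have "fill_distance X (xs ` {..<t}) \<le> R * l"
      proof (rule fill_le[OF X(2)], intro ballI)
        fix z assume z: "z \<in> X"
        have "\<exists>i<t. kern Psi l z (xs i) \<noteq> 0"
        proof (rule ccontr)
          assume "\<not> ?thesis"
          then have "Wt Psi l xs t z = 0" unfolding Wt_def by simp
          then show False using W z by (metis less_irrefl)
        qed
        then obtain i where i: "i < t" "kern Psi l z (xs i) \<noteq> 0" by blast
        have "scaleR (1/l) (z - xs i) \<in> {z. Psi z \<noteq> 0}" using i(2) by (simp add: kern_def)
        then have "scaleR (1/l) (z - xs i) \<in> cball 0 R" using Psi(2) by (rule subsetD[rotated])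
        then have "norm (scaleR (1/l) (z - xs i)) \<le> R" by (simp add: dist_norm)
        then have "dist z (xs i) / l \<le> R" using l(1) by (simp add: dist_norm)
        then have "dist z (xs i) \<le> R * l" using l(1) by (simp add: divide_le_eq)
        then show "\<exists>p\<in>xs ` {..<t}. dist z p \<le> R * l" using i by blast
      qed
      then show False using H t by blast
    qed
    then obtain z where z: "z \<in> X" "\<not> Wt Psi l xs t z > 0" by blast
    have tT: "t \<ge> T0" using t a by simp
    have bt: "beta t > 0" using beta by blast
    have ai: "acq Psi l (beta t) xs ys t z = \<infinity>" by (rule acq_inf[OF z(2) bt])
    have le: "acq Psi (ls t) (beta t) xs ys t z \<le> acq Psi (ls t) (beta t) xs ys t (xs t)"
      using run tT z(1) by blast
    then have "\<infinity> \<le> acq Psi l (beta t) xs ys t (xs t)" using ai lt by simp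
    then have ai2: "acq Psi l (beta t) xs ys t (xs t) = \<infinity>" by simp
    have nW: "\<not> Wt Psi l xs t (xs t) > 0"
    proof
      assume "Wt Psi l xs t (xs t) > 0"
      then have "acq Psi l (beta t) xs ys t (xs t) \<noteq> \<infinity>" by (rule acq_fin)
      then show False using ai2 by simp
    qed
    have "kern Psi l (xs t) (xs i) \<le> Wt Psi l xs t (xs t)" unfolding Wt_def
      by (rule member_le_sum) (use t Psi(1) in \<open>auto simp: kern_def\<close>)
    moreover have "kern Psi l (xs t) (xs i) \<ge> 0" using Psi(1) by (simp add: kern_def)
    ultimately have "kern Psi l (xs t) (xs i) = 0" using nW by linarith
    then have "\<not> dist 0 (scaleR (1/l) (xs t - xs i)) < r" using r(2) unfolding kern_def by blast
    then have "r \<le> dist (xs t) (xs i) / l" using l(1) by (simp add: dist_norm)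
    then show ?thesis using l(1) by (simp add: le_divide_eq)
  qed
  have rl: "r * l > 0" using r(1) l(1) by (rule mult_pos_pos)
  have inj: "inj_on xs {a..a+N}"
  proof (rule inj_onI, rule ccontr)
    fix i j assume ij: "i \<in> {a..a+N}" "j \<in> {a..a+N}" "xs i = xs j" "i \<noteq> j"
    show False
    proof (cases "i < j")
      case True
      have "r*l \<le> dist (xs j) (xs i)" by (rule sep[OF ij(2) True])
      then show ?thesis using ij(3) rl by simp
    next
      case False then have ji: "j < i" using ij(4) by linarith
      have "r*l \<le> dist (xs i) (xs j)" by (rule sep[OF ij(1) ji])
      then show ?thesis using ij(3) rl by simp
    qed
  qed
  have sub: "xs ` {a..a+N} \<subseteq> X"
  proof
    fix y assume "y \<in> xs ` {a..a+N}"
    then obtain i where "i \<in> {a..a+N}" "y = xs i" by blast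
    then have "i \<ge> T0" using a by simp
    then show "y \<in> X" using run \<open>y = xs i\<close> by blast
  qed
  have sepS: "\<forall>x\<in>xs ` {a..a+N}. \<forall>y\<in>xs ` {a..a+N}. x \<noteq> y \<longrightarrow> r*l \<le> dist x y"
  proof (intro ballI impI)
    fix x y assume xy: "x \<in> xs ` {a..a+N}" "y \<in> xs ` {a..a+N}" "x \<noteq> y"
    then obtain i j where ij: "i \<in> {a..a+N}" "j \<in> {a..a+N}" "x = xs i" "y = xs j" by blast
    then have ne: "i \<noteq> j" using xy by blast
    show "r*l \<le> dist x y"
    proof (cases "i < j")
      case True
      have "r*l \<le> dist (xs j) (xs i)" by (rule sep[OF ij(2) True])
      then show ?thesis using ij by (simp add: dist_commute)
    next
      case False
      then have "j < i" using ne by simp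
      have "r*l \<le> dist (xs i) (xs j)" by (rule sep[OF ij(1) \<open>j < i\<close>])
      then show ?thesis using ij by simp
    qed
  qed
  have "card (xs ` {a..a+N}) \<le> N" using mp[OF mp[OF spec[OF N, of "xs ` {a..a+N}"] sub] sepS] .
  moreover have "card (xs ` {a..a+N}) = card {a..a+N}" by (rule card_image[OF inj])
  moreover have "card {a..a+N} = N + 1" by simp
  ultimately show False by simp
qed


lemma INF_le_of_exists:
  fixes F :: "nat \<Rightarrow> real"
  assumes "\<forall>t\<ge>1. F t \<ge> 0" "t0 \<ge> 1" "F t0 \<le> B"
  shows "(INF t\<in>{1..}. F t) \<le> B"
proof -
  have "(INF t\<in>{1..}. F t) \<le> F t0"
    by (rule cINF_lower) (use assms in \<open>auto intro!: bdd_belowI2\<close>)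
  then show ?thesis using assms by linarith
qed

lemma INF_ge0:
  fixes F :: "nat \<Rightarrow> real"
  assumes "\<forall>t\<ge>1. F t \<ge> 0"
  shows "(INF t\<in>{1..}. F t) \<ge> 0"
  by (rule cINF_greatest) (use assms in auto)

theorem mainTheorem4:
  fixes X :: "'a::euclidean_space set"
    and f Psi :: "'a \<Rightarrow> real"
    and R M_Psi vs :: real
    and beta :: "nat \<Rightarrow> real"
    and M :: "'w measure"
    and eps :: "nat \<Rightarrow> 'w \<Rightarrow> real"
    and T0 :: nat
    and xinit :: "nat \<Rightarrow> 'a"
  assumes A1: "compact X" "convex X" "interior X \<noteq> {}"
    and A2: "continuous_on X f"
    and A3: "\<forall>z. 0 \<le> Psi z" "{z. Psi z \<noteq> 0} \<subseteq> cball 0 R" "isCont Psi 0"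
            "Psi 0 > 0" "\<forall>z. Psi z \<le> M_Psi"
    and A4: "prob_space M" "prob_space.indep_vars M (\<lambda>_. borel) eps UNIV"
            "\<forall>t. integrable M (eps t) \<and> (\<integral>\<omega>. eps t \<omega> \<partial>M) = 0"
            "vs > 0" "\<forall>t. sub_gaussian M (eps t) vs"
    and beta: "\<forall>t. beta t > 0" "filterlim beta at_top sequentially"
    and init: "T0 \<ge> 1" "\<forall>i<T0. xinit i \<in> X"
  shows
    "(\<forall>l>0. \<forall>x. boke_run M X f Psi beta (\<lambda>_. l) T0 xinit eps x \<longrightarrow>
        (AE \<omega> in M. (INF t\<in>{1..}. fill_distance X ((\<lambda>i. x i \<omega>) ` {..<t})) \<le> R * l))
     \<and>
     (\<exists>ls. (\<forall>t. ls t > 0) \<and> ls \<longlonglongrightarrow> 0 \<and>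
        (\<forall>x. boke_run M X f Psi beta ls T0 xinit eps x \<longrightarrow>
          (AE \<omega> in M. (INF t\<in>{1..}. fill_distance X ((\<lambda>i. x i \<omega>) ` {..<t})) = 0)))"
proof -
  have Xne: "X \<noteq> {}" using init(2)[rule_format, of 0] init(1) by auto
  obtain r where r: "r > 0" "\<forall>y. dist 0 y < r \<longrightarrow> Psi y \<noteq> 0"
    using continuous_at_avoid[OF A3(3), of 0] A3(4) by force
  have nonneg: "\<forall>t\<ge>1. fill_distance X ((\<lambda>i. x i \<omega>) ` {..<t}) \<ge> 0" for x :: "nat \<Rightarrow> 'w \<Rightarrow> 'a" and \<omega>
  proof (intro allI impI)
    fix t :: nat assume "1 \<le> t"
    then have "x 0 \<omega> \<in> (\<lambda>i. x i \<omega>) ` {..<t}" by simp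
    then have "(\<lambda>i. x i \<omega>) ` {..<t} \<noteq> {}" by blast
    then show "fill_distance X ((\<lambda>i. x i \<omega>) ` {..<t}) \<ge> 0" by (rule fill_nonneg[OF A1(1) Xne])
  qed
  have runI: "\<forall>t\<ge>T0. x t \<omega> \<in> X \<and> (\<forall>z\<in>X. acq Psi (ls t) (beta t) (\<lambda>i. x i \<omega>) (\<lambda>i. f (x i \<omega>) + eps i \<omega>) t z
                 \<le> acq Psi (ls t) (beta t) (\<lambda>i. x i \<omega>) (\<lambda>i. f (x i \<omega>) + eps i \<omega>) t (x t \<omega>))"
    if "boke_run M X f Psi beta ls T0 xinit eps x" "\<omega> \<in> space M" for ls x \<omega>
    using bspec[OF that(1)[unfolded boke_run_def] that(2)] by (rule conjunct2)
  have bnd: "\<exists>N. \<forall>S. S \<subseteq> X \<longrightarrow> (\<forall>x\<in>S. \<forall>y\<in>S. x \<noteq> y \<longrightarrow> r*l \<le> dist x y) \<longrightarrow> card S \<le> N"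
    if "l > 0" for l
  proof (rule sep_bound[OF A1(1)])
    show "0 < r * l" using r(1) that by (rule mult_pos_pos)
  qed
  have P1: "\<forall>l>0. \<forall>x. boke_run M X f Psi beta (\<lambda>_. l) T0 xinit eps x \<longrightarrow>
        (AE \<omega> in M. (INF t\<in>{1..}. fill_distance X ((\<lambda>i. x i \<omega>) ` {..<t})) \<le> R * l)"
  proof (intro allI impI)
    fix l :: real and x assume l: "l > 0" and run: "boke_run M X f Psi beta (\<lambda>_. l) T0 xinit eps x"
    obtain N where N: "\<forall>S. S \<subseteq> X \<longrightarrow> (\<forall>x\<in>S. \<forall>y\<in>S. x \<noteq> y \<longrightarrow> r*l \<le> dist x y) \<longrightarrow> card S \<le> N"
      using bnd[OF l] by blast
    show "AE \<omega> in M. (INF t\<in>{1..}. fill_distance X ((\<lambda>i. x i \<omega>) ` {..<t})) \<le> R * l"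
    proof (rule AE_I2)
      fix \<omega> assume \<omega>: "\<omega> \<in> space M"
      have "\<exists>t\<in>{T0..T0+N}. fill_distance X ((\<lambda>i. x i \<omega>) ` {..<t}) \<le> R * l"
      proof (rule block[OF A1(1) Xne A3(1,2) r beta(1) runI[OF run \<omega>] l])
        show "\<forall>t\<in>{T0..T0 + N}. (\<lambda>_. l) t = l" by simp
      qed (use N in auto)
      then obtain t where t: "t \<in> {T0..T0+N}" "fill_distance X ((\<lambda>i. x i \<omega>) ` {..<t}) \<le> R * l"
        by blast
      show "(INF t\<in>{1..}. fill_distance X ((\<lambda>i. x i \<omega>) ` {..<t})) \<le> R * l"
        by (rule INF_le_of_exists[OF nonneg[of x \<omega>] _ t(2)]) (use t init in auto)
    qed
  qed
  have "\<forall>k. \<exists>N. \<forall>S. S \<subseteq> X \<longrightarrow> (\<forall>x\<in>S. \<forall>y\<in>S. x \<noteq> y \<longrightarrow> r*(1/(real k+1)) \<le> dist x y) \<longrightarrow> card S \<le> N"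
  proof
    fix k :: nat
    have "(0::real) < 1/(real k+1)" by simp
    then show "\<exists>N. \<forall>S. S \<subseteq> X \<longrightarrow> (\<forall>x\<in>S. \<forall>y\<in>S. x \<noteq> y \<longrightarrow> r*(1/(real k+1)) \<le> dist x y) \<longrightarrow> card S \<le> N"
      by (rule bnd)
  qed
  from choice[OF this] obtain Nb where Nb: "\<forall>k. \<forall>S. S \<subseteq> X \<longrightarrow> (\<forall>x\<in>S. \<forall>y\<in>S. x \<noteq> y \<longrightarrow> r*(1/(real k+1)) \<le> dist x y) \<longrightarrow> card S \<le> Nb k"
    ..
  define s where "s = rec_nat T0 (\<lambda>k sk. sk + Nb k + 1)"
  have s0: "s 0 = T0" and sS: "s (Suc k) = s k + Nb k + 1" for k by (simp_all add: s_def)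
  have smono: "strict_mono s" by (rule strict_monoI_Suc) (simp add: sS)
  have sge: "k \<le> s k" for k using strict_mono_imp_increasing[OF smono] .
  define blk where "blk t = Max {k. s k \<le> t}" for t
  define ls where "ls t = 1 / (real (blk t) + 1)" for t
  have fin: "finite {k. s k \<le> t}" for t
  proof (rule finite_subset[of _ "{..t}"])
    show "{k. s k \<le> t} \<subseteq> {..t}" using sge le_trans by blast
  qed simp
  have blk_eq: "blk t = k" if "s k \<le> t" "t < s (Suc k)" for t k
  proof -
    have "\<forall>j\<in>{k. s k \<le> t}. j \<le> k"
    proof (intro ballI, rule ccontr)
      fix j assume "j \<in> {k. s k \<le> t}" "\<not> j \<le> k"
      then have "s (Suc k) \<le> s j" "s j \<le> t" using strict_mono_less_eq[OF smono] by auto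
      then show False using that by simp
    qed
    then show ?thesis unfolding blk_def using that fin by (intro Max_eqI) auto
  qed
  have blk_ge: "k \<le> blk t" if "s k \<le> t" for t k
    unfolding blk_def using that fin by (intro Max_ge) auto
  have lspos: "\<forall>t. ls t > 0" unfolding ls_def by simp
  have lslim: "ls \<longlonglongrightarrow> 0"
  proof (rule LIMSEQ_I)
    fix e :: real assume e: "e > 0"
    obtain k :: nat where k: "1 / e < real k" using reals_Archimedean2 by blast
    show "\<exists>no. \<forall>n\<ge>no. norm (ls n - 0) < e"
    proof (intro exI allI impI)
      fix n assume "s k \<le> n"
      then have "k \<le> blk n" by (rule blk_ge)
      then have "real k + 1 \<le> real (blk n) + 1" by simp
      moreover have "1 / e < real k + 1" using k by simp
      ultimately have "1 / e < real (blk n) + 1" by linarith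
      then have "1 < e * (real (blk n) + 1)" using e by (simp add: divide_less_eq mult.commute)
      then have "1 / (real (blk n) + 1) < e" by (simp add: divide_less_eq)
      then show "norm (ls n - 0) < e" unfolding ls_def by simp
    qed
  qed
  have P2: "\<forall>x. boke_run M X f Psi beta ls T0 xinit eps x \<longrightarrow>
          (AE \<omega> in M. (INF t\<in>{1..}. fill_distance X ((\<lambda>i. x i \<omega>) ` {..<t})) = 0)"
  proof (intro allI impI)
    fix x assume run: "boke_run M X f Psi beta ls T0 xinit eps x"
    show "AE \<omega> in M. (INF t\<in>{1..}. fill_distance X ((\<lambda>i. x i \<omega>) ` {..<t})) = 0"
    proof (rule AE_I2)
      fix \<omega> assume \<omega>: "\<omega> \<in> space M"
      let ?I = "INF t\<in>{1..}. fill_distance X ((\<lambda>i. x i \<omega>) ` {..<t})"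
      have le: "?I \<le> R * (1/(real k + 1))" for k
      proof -
        have lsc: "\<forall>t\<in>{s k..s k + Nb k}. ls t = 1/(real k + 1)"
        proof
          fix t assume tt: "t \<in> {s k..s k + Nb k}"
          have t1: "s k \<le> t" using tt by simp
          have "t \<le> s k + Nb k" using tt by simp
          then have t2: "t < s (Suc k)" unfolding sS by linarith
          have "blk t = k" by (rule blk_eq[OF t1 t2])
          then show "ls t = 1/(real k + 1)" unfolding ls_def by simp
        qed
        have lk: "(0::real) < 1/(real k + 1)" by simp
        have sT: "s k \<ge> T0" using s0 strict_mono_less_eq[OF smono, of 0 k] by simp
        have "\<exists>t\<in>{s k..s k+Nb k}. fill_distance X ((\<lambda>i. x i \<omega>) ` {..<t}) \<le> R * (1/(real k + 1))"
        proof (rule block[OF A1(1) Xne A3(1,2) r beta(1) runI[OF run \<omega>] lk lsc])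
          show "T0 \<le> s k" by (rule sT)
          show "\<forall>S. S \<subseteq> X \<longrightarrow> (\<forall>x\<in>S. \<forall>y\<in>S. x \<noteq> y \<longrightarrow> r*(1/(real k+1)) \<le> dist x y) \<longrightarrow> card S \<le> Nb k"
            by (rule spec[OF Nb])
        qed
        then obtain t where t: "t \<in> {s k..s k+Nb k}" "fill_distance X ((\<lambda>i. x i \<omega>) ` {..<t}) \<le> R * (1/(real k + 1))"
          by blast
        show ?thesis
          by (rule INF_le_of_exists[OF nonneg[of x \<omega>] _ t(2)]) (use t init sT in auto)
      qed
      have ge: "?I \<ge> 0" by (rule INF_ge0[OF nonneg[of x \<omega>]])
      show "?I = 0"
      proof (rule ccontr)
        assume "?I \<noteq> 0"
        then have pos: "?I > 0" using ge by simp
        obtain k :: nat where k: "R / ?I < real k" using reals_Archimedean2 by blast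
        have "R < real k * ?I" using k pos by (simp add: divide_less_eq)
        also have "\<dots> \<le> (real k + 1) * ?I" using pos by simp
        finally have "R * (1/(real k + 1)) < ?I" by (simp add: divide_less_eq mult.commute)
        then show False using le[of k] by simp
      qed
    qed
  qed
  show ?thesis using P1 P2 lspos lslim by blast
qed

end
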